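(* Let $M=(Q,R,X,\delta)$ be a rough finite state machine, and let $\delta^*$ and $\delta^{*D}$ be as defined in the context. Then for every $q\in Q$ and all words $x,y\in X^*$, $$\underline{\delta^*(q,xy)}=\underline{\delta^{*D}\big(\underline{\delta^*(q,x)},\,y\big)}\quad\text{and}\quad \overline{\delta^*(q,xy)}=\overline{\delta^{*D}\big(\overline{\delta^*(q,x)},\,y\big)}.$$
   Context: For a finite set $Q$ with an equivalence relation $R$ and $A\subseteq Q$, the lower approximation is $\underline{A}=\bigcup\{[x]\in Q/R: [x]\subseteq A\}$ and the upper approximation is $\overline{A}=\bigcup\{[x]\in Q/R:[x]\cap A\neq\emptyset\}$; the pair $(\underline A,\overline A)$ is the rough set of $A$. A set is definable if it is a union of $R$-classes. A rough finite state machine (RFSM) is a 4-tuple $M=(Q,R,X,\delta)$ where $Q$ is a nonempty finite set of states, $R$ is an equivalence relation on $Q$, $X$ is a nonempty finite set of inputs, and $\delta$ assigns to each $(q,a)\in Q\times X$ a pair $\delta(q,a)=(\underline{\delta(q,a)},\overline{\delta(q,a)})=(\underline{A},\overline{A})$ for some $A\subseteq Q$. $X^*$ denotes the set of finite words over $X$, with empty word $e$. Block transition: for a definable set $D\subseteq Q$ and $a\in X$, $\delta^D(D,a)=(\underline{\delta^D(D,a)},\overline{\delta^D(D,a)})$ with $\underline{\delta^D(D,a)}=\bigcup\{\underline{\delta(q,a)}: q\in B\subseteq D,\ B\in Q/R\}$ and $\overline{\delta^D(D,a)}=\bigcup\{\overline{\delta(q,a)}: q\in B\subseteq D,\ B\in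 Q/R\}$. Extended transition $\delta^*:Q\times X^*\to$ pairs of subsets of $Q$: $\delta^*(q,e)=([q],[q])$, and for $x\in X^*$, $a\in X$: $\underline{\delta^*(q,xa)}=\underline{\delta^D(\underline{\delta^*(q,x)},a)}$ and $\overline{\delta^*(q,xa)}=\overline{\delta^D(\overline{\delta^*(q,x)},a)}$. Extended block transition: for definable $D$ and $x\in X^*$, $\underline{\delta^{*D}(D,x)}=\bigcup\{\underline{\delta^*(q,x)}: q\in B\subseteq D,\ B\in Q/R\}$ and $\overline{\delta^{*D}(D,x)}=\bigcup\{\overline{\delta^*(q,x)}: q\in B\subseteq D,\ B\in Q/R\}$. *)

theory Defs
  imports Main
begin

definition lower_appr :: "'q set \<Rightarrow> ('q \<times> 'q) set \<Rightarrow> 'q set \<Rightarrow> 'q set" where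
  "lower_appr Q R A = \<Union>{B \<in> Q // R. B \<subseteq> A}"

definition upper_appr :: "'q set \<Rightarrow> ('q \<times> 'q) set \<Rightarrow> 'q set \<Rightarrow> 'q set" where
  "upper_appr Q R A = \<Union>{B \<in> Q // R. B \<inter> A \<noteq> {}}"

definition definable :: "'q set \<Rightarrow> ('q \<times> 'q) set \<Rightarrow> 'q set \<Rightarrow> bool" where
  "definable Q R D \<longleftrightarrow> (\<exists>\<B> \<subseteq> Q // R. D = \<Union>\<B>)"

definition rfsm :: "'q set \<Rightarrow> ('q \<times> 'q) set \<Rightarrow> 'a set \<Rightarrow> ('q \<Rightarrow> 'a \<Rightarrow> 'q set \<times> 'q set) \<Rightarrow> bool" where
  "rfsm Q R X \<delta> \<longleftrightarrow> Q \<noteq> {} \<and> finite Q \<and> equiv Q R \<and> X \<noteq> {} \<and> finite X \<and>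
     (\<forall>q\<in>Q. \<forall>a\<in>X. \<exists>A\<subseteq>Q. \<delta> q a = (lower_appr Q R A, upper_appr Q R A))"

definition block_lower :: "'q set \<Rightarrow> ('q \<times> 'q) set \<Rightarrow> ('q \<Rightarrow> 'a \<Rightarrow> 'q set \<times> 'q set) \<Rightarrow> 'q set \<Rightarrow> 'a \<Rightarrow> 'q set" where
  "block_lower Q R \<delta> D a = \<Union>{fst (\<delta> q a) | q B. q \<in> B \<and> B \<subseteq> D \<and> B \<in> Q // R}"

definition block_upper :: "'q set \<Rightarrow> ('q \<times> 'q) set \<Rightarrow> ('q \<Rightarrow> 'a \<Rightarrow> 'q set \<times> 'q set) \<Rightarrow> 'q set \<Rightarrow> 'a \<Rightarrow> 'q set" where
  "block_upper Q R \<delta> D a = \<Union>{snd (\<delta> q a) | q B. q \<in> B \<and> B \<subseteq> D \<and> B \<in> Q // R}"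

definition delta_star :: "'q set \<Rightarrow> ('q \<times> 'q) set \<Rightarrow> ('q \<Rightarrow> 'a \<Rightarrow> 'q set \<times> 'q set) \<Rightarrow> 'q \<Rightarrow> 'a list \<Rightarrow> 'q set \<times> 'q set" where
  "delta_star Q R \<delta> q w =
     foldl (\<lambda>(L, U) a. (block_lower Q R \<delta> L a, block_upper Q R \<delta> U a)) (R `` {q}, R `` {q}) w"

lemma delta_star_Nil: "delta_star Q R \<delta> q [] = (R `` {q}, R `` {q})"
  by (simp add: delta_star_def)

lemma delta_star_snoc:
  "delta_star Q R \<delta> q (x @ [a]) =
     (block_lower Q R \<delta> (fst (delta_star Q R \<delta> q x)) a, block_upper Q R \<delta> (snd (delta_star Q R \<delta> q x)) a)"
  by (simp add: delta_star_def split: prod.splits)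

definition ext_block_lower :: "'q set \<Rightarrow> ('q \<times> 'q) set \<Rightarrow> ('q \<Rightarrow> 'a \<Rightarrow> 'q set \<times> 'q set) \<Rightarrow> 'q set \<Rightarrow> 'a list \<Rightarrow> 'q set" where
  "ext_block_lower Q R \<delta> D x = \<Union>{fst (delta_star Q R \<delta> q x) | q B. q \<in> B \<and> B \<subseteq> D \<and> B \<in> Q // R}"

definition ext_block_upper :: "'q set \<Rightarrow> ('q \<times> 'q) set \<Rightarrow> ('q \<Rightarrow> 'a \<Rightarrow> 'q set \<times> 'q set) \<Rightarrow> 'q set \<Rightarrow> 'a list \<Rightarrow> 'q set" where
  "ext_block_upper Q R \<delta> D x = \<Union>{snd (delta_star Q R \<delta> q x) | q B. q \<in> B \<and> B \<subseteq> D \<and> B \<in> Q // R}"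

end

theory Submission
  imports Defs
begin

definition cl :: "'q set \<Rightarrow> ('q \<times> 'q) set \<Rightarrow> 'q set \<Rightarrow> bool" where
  "cl Q R D \<longleftrightarrow> D \<subseteq> Q \<and> (\<forall>B\<in>Q//R. B \<inter> D \<noteq> {} \<longrightarrow> B \<subseteq> D)"

definition LL where "LL Q R \<delta> D y = foldl (\<lambda>S a. block_lower Q R \<delta> S a) D y"
definition UU where "UU Q R \<delta> D y = foldl (\<lambda>S a. block_upper Q R \<delta> S a) D y"

lemma ds_LU: "delta_star Q R \<delta> q w = (LL Q R \<delta> (R``{q}) w, UU Q R \<delta> (R``{q}) w)"
proof (induction w rule: rev_induct)
  case Nil then show ?case by (simp add: delta_star_Nil LL_def UU_def)
next
  case (snoc a w) then show ?case by (simp add: delta_star_snoc LL_def UU_def)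
qed

lemma class_closed: "equiv Q R \<Longrightarrow> B \<in> Q//R \<Longrightarrow> cl Q R B"
proof -
  assume e: "equiv Q R" and b: "B \<in> Q//R"
  have "C \<inter> B \<noteq> {} \<Longrightarrow> C \<subseteq> B" if "C \<in> Q//R" for C
    using quotient_disj[OF e that b] by blast
  then show ?thesis unfolding cl_def using in_quotient_imp_subset[OF e b] by blast
qed

lemma class_sub_Union:
  assumes "equiv Q R" "B \<in> Q//R" "\<forall>s\<in>S. cl Q R s" "B \<subseteq> \<Union>S"
  shows "\<exists>s\<in>S. B \<subseteq> s"
proof -
  obtain b where "b \<in> B" using in_quotient_imp_non_empty[OF assms(1,2)] by blast
  then obtain s where "s \<in> S" "b \<in> s" using assms(4) by blast
  then show ?thesis using assms(2,3) \<open>b\<in>B\<close> unfolding cl_def by blast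
qed

lemma cl_Union: "\<forall>s\<in>S. cl Q R s \<Longrightarrow> cl Q R (\<Union>S)"
  unfolding cl_def by blast

lemma lower_cl: "equiv Q R \<Longrightarrow> cl Q R (lower_appr Q R A)"
  unfolding lower_appr_def by (rule cl_Union) (auto intro: class_closed)

lemma upper_cl: "equiv Q R \<Longrightarrow> cl Q R (upper_appr Q R A)"
  unfolding upper_appr_def by (rule cl_Union) (auto intro: class_closed)

lemma bl_cl:
  assumes "rfsm Q R X \<delta>" "a \<in> X"
  shows "cl Q R (block_lower Q R \<delta> D a)" "cl Q R (block_upper Q R \<delta> D a)"
proof -
  have eq: "equiv Q R" using assms(1) by (simp add: rfsm_def)
  have "\<forall>q\<in>Q. cl Q R (fst (\<delta> q a)) \<and> cl Q R (snd (\<delta> q a))"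
    using assms lower_cl[OF eq] upper_cl[OF eq] unfolding rfsm_def by fastforce
  moreover have "\<And>q B. q \<in> B \<Longrightarrow> B \<in> Q//R \<Longrightarrow> q \<in> Q"
    using eq in_quotient_imp_subset by blast
  ultimately show "cl Q R (block_lower Q R \<delta> D a)" "cl Q R (block_upper Q R \<delta> D a)"
    unfolding block_lower_def block_upper_def by (auto intro!: cl_Union)
qed

lemma bl_Union:
  assumes "equiv Q R" "\<forall>s\<in>S. cl Q R s"
  shows "block_lower Q R \<delta> (\<Union>S) a = \<Union>((\<lambda>s. block_lower Q R \<delta> s a) ` S)"
        "block_upper Q R \<delta> (\<Union>S) a = \<Union>((\<lambda>s. block_upper Q R \<delta> s a) ` S)"
proof -
  have k: "B \<subseteq> \<Union>S \<longleftrightarrow> (\<exists>s\<in>S. B \<subseteq> s)" if "B \<in> Q//R" for B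
    using class_sub_Union[OF assms(1) that assms(2)] by blast
  have "{f q | q B. q \<in> B \<and> B \<subseteq> \<Union>S \<and> B \<in> Q // R}
        = (\<Union>s\<in>S. {f q | q B. q \<in> B \<and> B \<subseteq> s \<and> B \<in> Q // R})" for f :: "_ \<Rightarrow> 'x"
  proof (rule set_eqI, rule iffI)
    fix z assume "z \<in> {f q | q B. q \<in> B \<and> B \<subseteq> \<Union>S \<and> B \<in> Q // R}"
    then obtain q B where "z = f q" "q \<in> B" "B \<subseteq> \<Union>S" "B \<in> Q//R" by blast
    then obtain s where "s \<in> S" "B \<subseteq> s" using k by blast
    then show "z \<in> (\<Union>s\<in>S. {f q | q B. q \<in> B \<and> B \<subseteq> s \<and> B \<in> Q // R})"
      using \<open>z = f q\<close> \<open>q \<in> B\<close> \<open>B \<in> Q//R\<close> by blast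
  next
    fix z assume "z \<in> (\<Union>s\<in>S. {f q | q B. q \<in> B \<and> B \<subseteq> s \<and> B \<in> Q // R})"
    then obtain s q B where "s \<in> S" "z = f q" "q \<in> B" "B \<subseteq> s" "B \<in> Q//R" by blast
    then show "z \<in> {f q | q B. q \<in> B \<and> B \<subseteq> \<Union>S \<and> B \<in> Q // R}" by blast
  qed
  note E = this
  show "block_lower Q R \<delta> (\<Union>S) a = \<Union>((\<lambda>s. block_lower Q R \<delta> s a) ` S)"
    unfolding block_lower_def E[of "\<lambda>q. fst (\<delta> q a)"] by blast
  show "block_upper Q R \<delta> (\<Union>S) a = \<Union>((\<lambda>s. block_upper Q R \<delta> s a) ` S)"
    unfolding block_upper_def E[of "\<lambda>q. snd (\<delta> q a)"] by blast
qed

lemma LL_Union: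
  assumes "rfsm Q R X \<delta>"
  shows "y \<in> lists X \<Longrightarrow> \<forall>s\<in>S. cl Q R s \<Longrightarrow> LL Q R \<delta> (\<Union>S) y = \<Union>((\<lambda>s. LL Q R \<delta> s y) ` S)
       \<and> UU Q R \<delta> (\<Union>S) y = \<Union>((\<lambda>s. UU Q R \<delta> s y) ` S)"
proof (induction y arbitrary: S)
  case Nil then show ?case by (simp add: LL_def UU_def)
next
  case (Cons a y)
  have eq: "equiv Q R" using assms(1) by (simp add: rfsm_def)
  have a: "a \<in> X" "y \<in> lists X" using Cons.prems by auto
  have c1: "\<forall>s\<in>(\<lambda>s. block_lower Q R \<delta> s a) ` S. cl Q R s"
   and c2: "\<forall>s\<in>(\<lambda>s. block_upper Q R \<delta> s a) ` S. cl Q R s"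
    using bl_cl[OF assms(1) a(1)] by auto
  have "LL Q R \<delta> (\<Union>S) (a#y) = LL Q R \<delta> (\<Union>((\<lambda>s. block_lower Q R \<delta> s a) ` S)) y"
    unfolding LL_def foldl_Cons bl_Union(1)[OF eq Cons.prems(2)] ..
  also have "\<dots> = \<Union>((\<lambda>s. LL Q R \<delta> s y) ` (\<lambda>s. block_lower Q R \<delta> s a) ` S)"
    using Cons.IH[OF a(2) c1] by (simp only: image_image)
  also have "\<dots> = \<Union>((\<lambda>s. LL Q R \<delta> s (a#y)) ` S)" by (simp add: LL_def)
  finally have 1: "LL Q R \<delta> (\<Union>S) (a#y) = \<Union>((\<lambda>s. LL Q R \<delta> s (a#y)) ` S)" .
  have "UU Q R \<delta> (\<Union>S) (a#y) = UU Q R \<delta> (\<Union>((\<lambda>s. block_upper Q R \<delta> s a) ` S)) y"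
    unfolding UU_def foldl_Cons bl_Union(2)[OF eq Cons.prems(2)] ..
  also have "\<dots> = \<Union>((\<lambda>s. UU Q R \<delta> s y) ` (\<lambda>s. block_upper Q R \<delta> s a) ` S)"
    using Cons.IH[OF a(2) c2] by (simp only: image_image)
  also have "\<dots> = \<Union>((\<lambda>s. UU Q R \<delta> s (a#y)) ` S)" by (simp add: UU_def)
  finally show ?case using 1 by simp
qed

lemma cl_decomp:
  assumes e: "equiv Q R" and c: "cl Q R D"
  shows "D = \<Union>{B\<in>Q//R. B \<subseteq> D}"
proof (rule subset_antisym)
  show "D \<subseteq> \<Union>{B\<in>Q//R. B \<subseteq> D}"
  proof
    fix d assume dD: "d \<in> D"
    have cc: "\<forall>B\<in>Q//R. B \<inter> D \<noteq> {} \<longrightarrow> B \<subseteq> D" "D \<subseteq> Q" using c by (simp_all add: cl_def)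
    then have dQ: "d \<in> Q" using dD by blast
    have q: "R``{d} \<in> Q//R" using quotientI[OF dQ] .
    have dd: "d \<in> R``{d}" using equiv_class_self[OF e dQ] .
    have "R``{d} \<subseteq> D" using cc(1) q dd dD by blast
    then show "d \<in> \<Union>{B\<in>Q//R. B \<subseteq> D}" using q dd by blast
  qed
next
  show "\<Union>{B\<in>Q//R. B \<subseteq> D} \<subseteq> D" by blast
qed

lemma LL_cl: "rfsm Q R X \<delta> \<Longrightarrow> q \<in> Q \<Longrightarrow> x \<in> lists X \<Longrightarrow> cl Q R (LL Q R \<delta> (R``{q}) x) \<and> cl Q R (UU Q R \<delta> (R``{q}) x)"
proof (induction x rule: rev_induct)
  case Nil
  then have "R``{q} \<in> Q//R" by (simp add: quotientI)
  then show ?case using Nil class_closed by (auto simp: LL_def UU_def rfsm_def)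
next
  case (snoc a x) then show ?case using bl_cl[of Q R X \<delta> a] by (auto simp: LL_def UU_def)
qed

lemma ext_eq_gen:
  assumes "equiv Q R" and h: "\<And>q. g q = F (R``{q})"
  shows "{g q | q B. q \<in> B \<and> B \<subseteq> D \<and> B \<in> Q // R} = F ` {B\<in>Q//R. B \<subseteq> D}"
proof (rule set_eqI, rule iffI)
  have k: "\<And>q B. q \<in> B \<Longrightarrow> B \<in> Q//R \<Longrightarrow> R``{q} = B"
    using assms(1) by (metis Image_singleton_iff equiv_class_eq_iff quotientE)
  fix z
  {
    assume "z \<in> {g q | q B. q \<in> B \<and> B \<subseteq> D \<and> B \<in> Q // R}"
    then obtain q B where z: "z = g q" "q \<in> B" "B \<subseteq> D" "B \<in> Q//R" by blast
    then have "z = F B" using h k by simp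
    then show "z \<in> F ` {B\<in>Q//R. B \<subseteq> D}" using z by blast
  next
    assume "z \<in> F ` {B\<in>Q//R. B \<subseteq> D}"
    then obtain B where z: "z = F B" "B \<in> Q//R" "B \<subseteq> D" by blast
    obtain q where q: "q \<in> B" using in_quotient_imp_non_empty[OF assms(1) z(2)] by blast
    have "z = g q" using h k[OF q z(2)] z(1) by simp
    then show "z \<in> {g q | q B. q \<in> B \<and> B \<subseteq> D \<and> B \<in> Q // R}" using q z by blast
  }
qed

lemma ext_eq:
  assumes "equiv Q R"
  shows "{fst (delta_star Q R \<delta> q y) | q B. q \<in> B \<and> B \<subseteq> D \<and> B \<in> Q // R}
          = (\<lambda>s. LL Q R \<delta> s y) ` {B\<in>Q//R. B \<subseteq> D}"
        "{snd (delta_star Q R \<delta> q y) | q B. q \<in> B \<and> B \<subseteq> D \<and> B \<in> Q // R}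
          = (\<lambda>s. UU Q R \<delta> s y) ` {B\<in>Q//R. B \<subseteq> D}"
  by (rule ext_eq_gen[OF assms], simp add: ds_LU)+

theorem lemma2p1:
  assumes "rfsm Q R X \<delta>" and "q \<in> Q" and "x \<in> lists X" and "y \<in> lists X"
  shows "fst (delta_star Q R \<delta> q (x @ y)) =
           ext_block_lower Q R \<delta> (fst (delta_star Q R \<delta> q x)) y
       \<and> snd (delta_star Q R \<delta> q (x @ y)) =
           ext_block_upper Q R \<delta> (snd (delta_star Q R \<delta> q x)) y"
proof -
  have eq: "equiv Q R" using assms(1) by (simp add: rfsm_def)
  define L where "L = LL Q R \<delta> (R``{q}) x"
  define U where "U = UU Q R \<delta> (R``{q}) x"
  have cLU: "cl Q R L \<and> cl Q R U" using LL_cl[OF assms(1-3)] unfolding L_def U_def .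
  have cc: "\<forall>s\<in>{B\<in>Q//R. B \<subseteq> D}. cl Q R s" for D using class_closed[OF eq] by blast
  have dL: "L = \<Union>{B\<in>Q//R. B \<subseteq> L}" using cl_decomp[OF eq conjunct1[OF cLU]] .
  have dU: "U = \<Union>{B\<in>Q//R. B \<subseteq> U}" using cl_decomp[OF eq conjunct2[OF cLU]] .
  have 1: "LL Q R \<delta> L y = \<Union>((\<lambda>s. LL Q R \<delta> s y) ` {B\<in>Q//R. B \<subseteq> L})"
    using conjunct1[OF LL_Union[OF assms(1) assms(4) cc[of L]]] dL by simp
  have 2: "UU Q R \<delta> U y = \<Union>((\<lambda>s. UU Q R \<delta> s y) ` {B\<in>Q//R. B \<subseteq> U})"
    using conjunct2[OF LL_Union[OF assms(1) assms(4) cc[of U]]] dU by simp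
  have fx: "fst (delta_star Q R \<delta> q x) = L" "snd (delta_star Q R \<delta> q x) = U"
    by (simp_all add: ds_LU L_def U_def)
  have fxy: "fst (delta_star Q R \<delta> q (x @ y)) = LL Q R \<delta> L y"
       "snd (delta_star Q R \<delta> q (x @ y)) = UU Q R \<delta> U y"
    by (simp_all add: ds_LU L_def U_def LL_def UU_def)
  show ?thesis
    unfolding ext_block_lower_def ext_block_upper_def ext_eq[OF eq] fx fxy 1 2 by (rule conjI refl)+
qed

end
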